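(* Let $\Gamma$ be a finite group and let $\alpha_1,\dots,\alpha_l$ be the (pairwise inequivalent) irreducible unitary representations of $\Gamma$ of dimension greater than one, $\alpha_k$ acting on $\mathbb{C}^{n_k}$. For $\boldsymbol{\xi}=(\xi_1,\dots,\xi_l)\in\prod_{k=1}^l S^{n_k-1}$ (each $\xi_k$ a unit vector in $\mathbb{C}^{n_k}$) set $T_{\boldsymbol\xi}(g)=\sum_{k=1}^l\langle\xi_k,\alpha_k(g)\xi_k\rangle$, and for $g,h\in\Gamma$ let $V_{g,h}=\{\boldsymbol\xi\in\prod_k S^{n_k-1}:T_{\boldsymbol\xi}(g)=T_{\boldsymbol\xi}(h)\}$. If $g\neq h$ and at least one of $g,h$ is not central in $\Gamma$, then $V_{g,h}$ is nowhere dense; that is, for almost all choices of $\boldsymbol\xi$ we have $T_{\boldsymbol\xi}(g)\neq T_{\boldsymbol\xi}(h)$.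
   Context: $S^{n_k-1}$ denotes the unit sphere of $\mathbb{C}^{n_k}$, regarded as a real algebraic variety; "almost all" refers to the product of the rotation-invariant probability measures (a nowhere dense real algebraic subset of the irreducible variety $\prod_k S^{n_k-1}$ has measure zero). *)

theory Defs
  imports "HOL-Analysis.Analysis" "HOL-Algebra.Group"
begin

text \<open>Vectors of length n and n x n matrices over the complex numbers are encoded as
functions nat => complex and nat => nat => complex, vanishing outside the index range.\<close>

definition is_vec :: "nat \<Rightarrow> (nat \<Rightarrow> complex) \<Rightarrow> bool" where
  "is_vec n v \<longleftrightarrow> (\<forall>i. n \<le> i \<longrightarrow> v i = 0)"

definition is_mat :: "nat \<Rightarrow> (nat \<Rightarrow> nat \<Rightarrow> complex) \<Rightarrow> bool" where
  "is_mat n A \<longleftrightarrow> (\<forall>i j. (n \<le> i \<or> n \<le> j) \<longrightarrow> A i j = 0)"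

definition mat_mul :: "nat \<Rightarrow> (nat \<Rightarrow> nat \<Rightarrow> complex) \<Rightarrow> (nat \<Rightarrow> nat \<Rightarrow> complex) \<Rightarrow> nat \<Rightarrow> nat \<Rightarrow> complex" where
  "mat_mul n A B = (\<lambda>i j. if i < n \<and> j < n then (\<Sum>m<n. A i m * B m j) else 0)"

definition id_mat :: "nat \<Rightarrow> nat \<Rightarrow> nat \<Rightarrow> complex" where
  "id_mat n = (\<lambda>i j. if i < n \<and> j < n \<and> i = j then 1 else 0)"

definition adj_mat :: "nat \<Rightarrow> (nat \<Rightarrow> nat \<Rightarrow> complex) \<Rightarrow> nat \<Rightarrow> nat \<Rightarrow> complex" where
  "adj_mat n A = (\<lambda>i j. if i < n \<and> j < n then cnj (A j i) else 0)"

definition mat_vec :: "nat \<Rightarrow> (nat \<Rightarrow> nat \<Rightarrow> complex) \<Rightarrow> (nat \<Rightarrow> complex) \<Rightarrow> nat \<Rightarrow> complex" where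
  "mat_vec n A v = (\<lambda>i. if i < n then (\<Sum>j<n. A i j * v j) else 0)"

definition cinner :: "nat \<Rightarrow> (nat \<Rightarrow> complex) \<Rightarrow> (nat \<Rightarrow> complex) \<Rightarrow> complex" where
  "cinner n u v = (\<Sum>i<n. cnj (u i) * v i)"

definition unitary_rep :: "('a, 'b) monoid_scheme \<Rightarrow> nat \<Rightarrow> ('a \<Rightarrow> nat \<Rightarrow> nat \<Rightarrow> complex) \<Rightarrow> bool" where
  "unitary_rep G n \<rho> \<longleftrightarrow>
     (\<forall>g\<in>carrier G. is_mat n (\<rho> g)) \<and>
     (\<forall>g\<in>carrier G. \<forall>h\<in>carrier G. \<rho> (g \<otimes>\<^bsub>G\<^esub> h) = mat_mul n (\<rho> g) (\<rho> h)) \<and>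
     \<rho> \<one>\<^bsub>G\<^esub> = id_mat n \<and>
     (\<forall>g\<in>carrier G. mat_mul n (\<rho> g) (adj_mat n (\<rho> g)) = id_mat n)"

definition invariant_subspace :: "('a, 'b) monoid_scheme \<Rightarrow> nat \<Rightarrow> ('a \<Rightarrow> nat \<Rightarrow> nat \<Rightarrow> complex) \<Rightarrow> (nat \<Rightarrow> complex) set \<Rightarrow> bool" where
  "invariant_subspace G n \<rho> W \<longleftrightarrow>
     W \<subseteq> {v. is_vec n v} \<and> (\<lambda>_. 0) \<in> W \<and>
     (\<forall>u\<in>W. \<forall>v\<in>W. (\<lambda>i. u i + v i) \<in> W) \<and>
     (\<forall>c::complex. \<forall>v\<in>W. (\<lambda>i. c * v i) \<in> W) \<and>
     (\<forall>g\<in>carrier G. \<forall>v\<in>W. mat_vec n (\<rho> g) v \<in> W)"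

definition irreducible_unitary_rep :: "('a, 'b) monoid_scheme \<Rightarrow> nat \<Rightarrow> ('a \<Rightarrow> nat \<Rightarrow> nat \<Rightarrow> complex) \<Rightarrow> bool" where
  "irreducible_unitary_rep G n \<rho> \<longleftrightarrow>
     unitary_rep G n \<rho> \<and> 1 \<le> n \<and>
     (\<forall>W. invariant_subspace G n \<rho> W \<longrightarrow> W = {\<lambda>_. 0} \<or> W = {v. is_vec n v})"

definition equivalent_reps :: "('a, 'b) monoid_scheme \<Rightarrow> nat \<Rightarrow> ('a \<Rightarrow> nat \<Rightarrow> nat \<Rightarrow> complex) \<Rightarrow> nat \<Rightarrow> ('a \<Rightarrow> nat \<Rightarrow> nat \<Rightarrow> complex) \<Rightarrow> bool" where
  "equivalent_reps G n \<rho> m \<sigma> \<longleftrightarrow> n = m \<and>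
     (\<exists>P Q. is_mat n P \<and> is_mat n Q \<and> mat_mul n P Q = id_mat n \<and> mat_mul n Q P = id_mat n \<and>
        (\<forall>g\<in>carrier G. mat_mul n P (\<rho> g) = mat_mul n (\<sigma> g) P))"

definition central :: "('a, 'b) monoid_scheme \<Rightarrow> 'a \<Rightarrow> bool" where
  "central G g \<longleftrightarrow> g \<in> carrier G \<and> (\<forall>x\<in>carrier G. g \<otimes>\<^bsub>G\<^esub> x = x \<otimes>\<^bsub>G\<^esub> g)"

definition sphere_prod :: "nat \<Rightarrow> (nat \<Rightarrow> nat) \<Rightarrow> (nat \<Rightarrow> nat \<Rightarrow> complex) set" where
  "sphere_prod l n = {\<xi>. (\<forall>k. l \<le> k \<longrightarrow> \<xi> k = (\<lambda>_. 0)) \<and>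
      (\<forall>k<l. is_vec (n k) (\<xi> k) \<and> (\<Sum>i<n k. (cmod (\<xi> k i))\<^sup>2) = 1)}"

definition T_xi :: "nat \<Rightarrow> (nat \<Rightarrow> nat) \<Rightarrow> (nat \<Rightarrow> 'a \<Rightarrow> nat \<Rightarrow> nat \<Rightarrow> complex) \<Rightarrow> (nat \<Rightarrow> nat \<Rightarrow> complex) \<Rightarrow> 'a \<Rightarrow> complex" where
  "T_xi l n \<alpha> \<xi> g = (\<Sum>k<l. cinner (n k) (\<xi> k) (mat_vec (n k) (\<alpha> k g) (\<xi> k)))"

definition V_set :: "nat \<Rightarrow> (nat \<Rightarrow> nat) \<Rightarrow> (nat \<Rightarrow> 'a \<Rightarrow> nat \<Rightarrow> nat \<Rightarrow> complex) \<Rightarrow> 'a \<Rightarrow> 'a \<Rightarrow> (nat \<Rightarrow> nat \<Rightarrow> complex) set" where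
  "V_set l n \<alpha> g h = {\<xi> \<in> sphere_prod l n. T_xi l n \<alpha> \<xi> g = T_xi l n \<alpha> \<xi> h}"

text \<open>The type nat => nat => complex carries the product topology, which on sphere_prod l n
(only finitely many nonzero coordinates) is the usual Euclidean topology.\<close>
definition nowhere_dense_in :: "'x::topological_space set \<Rightarrow> 'x set \<Rightarrow> bool" where
  "nowhere_dense_in S V \<longleftrightarrow> (top_of_set S) interior_of ((top_of_set S) closure_of V) = {}"

end

theory Submission
  imports Defs
begin


lemma is_vec_mat_vec[simp]: "is_vec n (mat_vec n A v)"
  by (simp add: is_vec_def mat_vec_def)

lemma cinner_add_right: "cinner n u (\<lambda>i. v i + w i) = cinner n u v + cinner n u w"
  by (simp add: cinner_def algebra_simps sum.distrib)
lemma cinner_diff_right: "cinner n u (\<lambda>i. v i - w i) = cinner n u v - cinner n u w"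
  by (simp add: cinner_def algebra_simps sum_subtractf)
lemma cinner_add_left: "cinner n (\<lambda>i. v i + w i) u = cinner n v u + cinner n w u"
  by (simp add: cinner_def algebra_simps sum.distrib)
lemma cinner_diff_left: "cinner n (\<lambda>i. v i - w i) u = cinner n v u - cinner n w u"
  by (simp add: cinner_def algebra_simps sum_subtractf)
lemma cinner_scale_right: "cinner n u (\<lambda>i. c * v i) = c * cinner n u v"
  by (simp add: cinner_def algebra_simps sum_distrib_left)
lemma cinner_scale_left: "cinner n (\<lambda>i. c * v i) u = cnj c * cinner n v u"
  by (simp add: cinner_def algebra_simps sum_distrib_left)
lemma cinner_sum_right: "cinner n u (\<lambda>i. \<Sum>j\<in>J. f j i) = (\<Sum>j\<in>J. cinner n u (f j))"
  unfolding cinner_def by (simp add: sum_distrib_left) (rule sum.swap)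
lemma cinner_sum_left: "cinner n (\<lambda>i. \<Sum>j\<in>J. f j i) u = (\<Sum>j\<in>J. cinner n (f j) u)"
  unfolding cinner_def by (simp add: sum_distrib_right cnj_sum) (rule sum.swap)
lemma cinner_cnj: "cnj (cinner n u v) = cinner n v u"
  by (simp add: cinner_def cnj_sum mult.commute)
lemma cinner_zero_right[simp]: "cinner n u (\<lambda>_. 0) = 0"
  by (simp add: cinner_def)
lemma cinner_zero_left[simp]: "cinner n (\<lambda>_. 0) u = 0"
  by (simp add: cinner_def)

lemma cinner_self: "cinner n v v = of_real (\<Sum>i<n. (cmod (v i))\<^sup>2)"
  unfolding cinner_def by (simp add: complex_norm_square[symmetric] mult.commute)

lemma cinner_self_eq_0:
  assumes "is_vec n v" "cinner n v v = 0" shows "v = (\<lambda>_. 0)"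
proof
  fix i
  have "(\<Sum>i<n. (cmod (v i))\<^sup>2) = 0" using assms(2) cinner_self[of n v] by (simp only: of_real_eq_0_iff)
  then have "\<forall>i\<in>{..<n}. (cmod (v i))\<^sup>2 = 0"
    by (subst sum_nonneg_eq_0_iff[symmetric]) auto
  then show "v i = 0" using assms(1) unfolding is_vec_def
    by (cases "i < n") auto
qed

lemma mat_vec_add: "mat_vec n A (\<lambda>i. u i + v i) = (\<lambda>i. mat_vec n A u i + mat_vec n A v i)"
  by (auto simp: mat_vec_def algebra_simps sum.distrib)
lemma mat_vec_diff: "mat_vec n A (\<lambda>i. u i - v i) = (\<lambda>i. mat_vec n A u i - mat_vec n A v i)"
  by (auto simp: mat_vec_def algebra_simps sum_subtractf)
lemma mat_vec_scale: "mat_vec n A (\<lambda>i. c * v i) = (\<lambda>i. c * mat_vec n A v i)"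
  by (auto simp: mat_vec_def algebra_simps sum_distrib_left)
lemma mat_vec_sum: "mat_vec n A (\<lambda>i. \<Sum>j\<in>J. f j i) = (\<lambda>i. \<Sum>j\<in>J. mat_vec n A (f j) i)"
proof
  fix i show "mat_vec n A (\<lambda>i. \<Sum>j\<in>J. f j i) i = (\<Sum>j\<in>J. mat_vec n A (f j) i)"
    by (cases "i < n") (auto simp: mat_vec_def sum_distrib_left intro: sum.swap)
qed
lemma mat_vec_zero[simp]: "mat_vec n A (\<lambda>_. 0) = (\<lambda>_. 0)"
  by (auto simp: mat_vec_def)

lemma mat_vec_mat_mul: "mat_vec n (mat_mul n A B) v = mat_vec n A (mat_vec n B v)"
proof
  fix i
  show "mat_vec n (mat_mul n A B) v i = mat_vec n A (mat_vec n B v) i"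
  proof (cases "i < n")
    case True
    have "mat_vec n (mat_mul n A B) v i = (\<Sum>j<n. (\<Sum>m<n. A i m * B m j) * v j)"
      using True by (simp add: mat_vec_def mat_mul_def)
    also have "\<dots> = (\<Sum>m<n. A i m * (\<Sum>j<n. B m j * v j))"
      by (simp add: sum_distrib_left sum_distrib_right mult.assoc) (rule sum.swap)
    also have "\<dots> = mat_vec n A (mat_vec n B v) i"
      using True by (simp add: mat_vec_def)
    finally show ?thesis .
  qed (simp add: mat_vec_def)
qed

lemma mat_vec_id: "is_vec n v \<Longrightarrow> mat_vec n (id_mat n) v = v"
proof
  fix i assume "is_vec n v"
  show "mat_vec n (id_mat n) v i = v i"
  proof (cases "i < n")
    case True
    have "mat_vec n (id_mat n) v i = (\<Sum>j<n. (if i = j then 1 else 0) * v j)"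
      using True by (simp add: mat_vec_def id_mat_def)
    also have "\<dots> = (\<Sum>j<n. (if i = j then v j else 0))"
      by (rule sum.cong) auto
    also have "\<dots> = v i" using True by (simp add: sum.delta)
    finally show ?thesis .
  qed (use \<open>is_vec n v\<close> in \<open>simp add: mat_vec_def is_vec_def\<close>)
qed

lemma cinner_adj:
  "cinner n (mat_vec n A u) w = cinner n u (mat_vec n (adj_mat n A) w)"
proof -
  have "cinner n (mat_vec n A u) w = (\<Sum>i<n. \<Sum>j<n. cnj (A i j) * cnj (u j) * w i)"
    by (simp add: cinner_def mat_vec_def cnj_sum sum_distrib_right)
  also have "\<dots> = (\<Sum>j<n. \<Sum>i<n. cnj (u j) * (cnj (A i j) * w i))"
    by (subst sum.swap) (simp add: algebra_simps)
  also have "\<dots> = cinner n u (mat_vec n (adj_mat n A) w)"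
    by (simp add: cinner_def mat_vec_def adj_mat_def sum_distrib_left)
  finally show ?thesis .
qed

lemma cinner_vec_extend:
  assumes "is_vec m u" shows "cinner (Suc m) u v = cinner m u v"
  using assms by (simp add: cinner_def is_vec_def)
lemma cinner_vec_extend2:
  assumes "is_vec m v" shows "cinner (Suc m) u v = cinner m u v"
  using assms by (simp add: cinner_def is_vec_def)


definition csubspace :: "nat \<Rightarrow> (nat \<Rightarrow> complex) set \<Rightarrow> bool" where
  "csubspace m X \<longleftrightarrow> X \<subseteq> {v. is_vec m v} \<and> (\<lambda>_. 0) \<in> X \<and>
     (\<forall>u\<in>X. \<forall>v\<in>X. (\<lambda>i. u i + v i) \<in> X) \<and> (\<forall>c::complex. \<forall>v\<in>X. (\<lambda>i. c * v i) \<in> X)"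

lemma csub_vec: "csubspace m X \<Longrightarrow> v \<in> X \<Longrightarrow> is_vec m v"
  by (auto simp: csubspace_def)
lemma csub_zero: "csubspace m X \<Longrightarrow> (\<lambda>_. 0) \<in> X"
  by (auto simp: csubspace_def)
lemma csub_add: "csubspace m X \<Longrightarrow> u \<in> X \<Longrightarrow> v \<in> X \<Longrightarrow> (\<lambda>i. u i + v i) \<in> X"
  by (auto simp: csubspace_def)
lemma csub_scale: "csubspace m X \<Longrightarrow> v \<in> X \<Longrightarrow> (\<lambda>i. c * v i) \<in> X"
  by (auto simp: csubspace_def)
lemma csub_diff: assumes "csubspace m X" "u \<in> X" "v \<in> X" shows "(\<lambda>i. u i - v i) \<in> X"
proof -
  have "(\<lambda>i. u i + (-1) * v i) \<in> X" using assms csub_add csub_scale by blast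
  then show ?thesis by simp
qed
lemma csub_sum: assumes "csubspace m X" "finite J" "\<And>j. j \<in> J \<Longrightarrow> f j \<in> X"
  shows "(\<lambda>i. \<Sum>j\<in>J. f j i) \<in> X"
  using assms(2,3)
proof (induction J rule: finite_induct)
  case empty then show ?case using csub_zero[OF assms(1)] by simp
next
  case (insert x F)
  then have "(\<lambda>i. f x i + (\<Sum>j\<in>F. f j i)) \<in> X" using csub_add[OF assms(1)] by auto
  then show ?case using insert by simp
qed

definition onb :: "nat \<Rightarrow> (nat \<Rightarrow> complex) set \<Rightarrow> nat \<Rightarrow> (nat \<Rightarrow> nat \<Rightarrow> complex) \<Rightarrow> bool" where
  "onb m X d u \<longleftrightarrow> (\<forall>i<d. u i \<in> X) \<and>
     (\<forall>i<d. \<forall>j<d. cinner m (u i) (u j) = (if i = j then 1 else 0)) \<and>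
     (\<forall>v\<in>X. v = (\<lambda>t. \<Sum>i<d. cinner m (u i) v * u i t))"

lemma onb_exists:
  "csubspace m X \<Longrightarrow> \<exists>d u. onb m X d u \<and> d \<le> m \<and> (X \<noteq> {v. is_vec m v} \<longrightarrow> d < m)"
proof (induction m arbitrary: X)
  case 0
  have X0: "\<And>v. v \<in> X \<Longrightarrow> v = (\<lambda>_. 0)"
    using csub_vec[OF 0] by (auto simp: is_vec_def)
  have "X = {v. is_vec 0 v}"
  proof (intro equalityI subsetI)
    fix x assume "x \<in> {v. is_vec 0 v}"
    then have "x = (\<lambda>_. 0)" by (auto simp: is_vec_def)
    then show "x \<in> X" using csub_zero[OF 0] by simp
  qed (use csub_vec[OF 0] in auto)
  moreover have "onb 0 X 0 u" for u using X0 by (auto simp: onb_def)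
  ultimately show ?case by blast
next
  case (Suc m)
  note sub = Suc.prems
  define X' where "X' = {v\<in>X. v m = 0}"
  have vecm: "is_vec m v" if "is_vec (Suc m) v" "v m = 0" for v
    using that unfolding is_vec_def by (metis Suc_leI le_neq_implies_less)
  have sub': "csubspace m X'"
    unfolding csubspace_def X'_def
    using csub_vec[OF sub] csub_zero[OF sub] csub_add[OF sub] csub_scale[OF sub] vecm
    by auto
  obtain d' u' where onb': "onb m X' d' u'" and dm: "d' \<le> m"
    and dlt: "X' \<noteq> {v. is_vec m v} \<longrightarrow> d' < m"
    using Suc.IH[OF sub'] by blast
  have u'X': "\<And>i. i < d' \<Longrightarrow> u' i \<in> X'" using onb' by (simp add: onb_def)
  have u'X: "\<And>i. i < d' \<Longrightarrow> u' i \<in> X" using u'X' by (simp add: X'_def)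
  have u'vec: "\<And>i. i < d' \<Longrightarrow> is_vec m (u' i)" using u'X' csub_vec[OF sub'] by blast
  have u'orth: "\<And>i j. i < d' \<Longrightarrow> j < d' \<Longrightarrow> cinner (Suc m) (u' i) (u' j) = (if i = j then 1 else 0)"
    using onb' u'vec by (simp add: onb_def cinner_vec_extend)
  have u'exp: "\<And>v. v \<in> X' \<Longrightarrow> v = (\<lambda>t. \<Sum>i<d'. cinner (Suc m) (u' i) v * u' i t)"
    using onb' u'vec by (simp add: onb_def cinner_vec_extend)
  show ?case
  proof (cases "\<forall>v\<in>X. v m = 0")
    case True
    then have "X' = X" by (auto simp: X'_def)
    then have "onb (Suc m) X d' u'"
      using u'X u'orth u'exp by (simp add: onb_def)
    then show ?thesis using dm by (intro exI[of _ d'] exI[of _ u']) auto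
  next
    case False
    then obtain w where wX: "w \<in> X" and wm: "w m \<noteq> 0" by blast
    define p where "p = (\<lambda>t. \<Sum>i<d'. cinner (Suc m) (u' i) w * u' i t)"
    have pX': "p \<in> X'" unfolding p_def
      by (rule csub_sum[OF sub']) (auto intro: csub_scale[OF sub'] u'X')
    define r where "r = (\<lambda>t. w t - p t)"
    have rX: "r \<in> X" unfolding r_def using csub_diff[OF sub wX] pX' by (auto simp: X'_def)
    have rm: "r m = w m" using pX' by (simp add: r_def X'_def)
    have rvec: "is_vec (Suc m) r" using csub_vec[OF sub rX] .
    have ur: "cinner (Suc m) (u' i) r = 0" if i: "i < d'" for i
    proof -
      have "cinner (Suc m) (u' i) p = (\<Sum>j<d'. cinner (Suc m) (u' j) w * cinner (Suc m) (u' i) (u' j))"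
        unfolding p_def by (simp add: cinner_sum_right cinner_scale_right)
      also have "\<dots> = (\<Sum>j<d'. if j = i then cinner (Suc m) (u' j) w else 0)"
        by (rule sum.cong) (auto simp: u'orth i)
      also have "\<dots> = cinner (Suc m) (u' i) w" using i by (simp add: sum.delta)
      finally show ?thesis unfolding r_def by (simp add: cinner_diff_right)
    qed
    have ru: "cinner (Suc m) r (u' i) = 0" if "i < d'" for i
      using ur[OF that] cinner_cnj[of "Suc m" "u' i" r] by simp
    define S where "S = (\<Sum>i<Suc m. (cmod (r i))\<^sup>2)"
    have rr: "cinner (Suc m) r r = of_real S" unfolding S_def by (rule cinner_self)
    have "r \<noteq> (\<lambda>_. 0)" using rm wm by (metis)
    then have "cinner (Suc m) r r \<noteq> 0" using cinner_self_eq_0[OF rvec] by blast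
    then have Sne: "S \<noteq> 0" using rr by simp
    have Spos: "S > 0" using Sne unfolding S_def by (simp add: less_le sum_nonneg)
    define c where "c = 1 / sqrt S"
    define e where "e = (\<lambda>t. complex_of_real c * r t)"
    have eX: "e \<in> X" unfolding e_def by (rule csub_scale[OF sub rX])
    have c2: "c * c * S = 1" using Spos unfolding c_def
      by (simp add: field_simps)
    have ee: "cinner (Suc m) e e = 1"
    proof -
      have "cinner (Suc m) e e = of_real c * of_real c * of_real S"
        unfolding e_def by (simp add: cinner_scale_left cinner_scale_right rr)
      also have "\<dots> = of_real (c * c * S)" by simp
      finally show ?thesis using c2 by simp
    qed
    have ue: "cinner (Suc m) (u' i) e = 0" if "i < d'" for i
      unfolding e_def using ur[OF that] by (simp add: cinner_scale_right)
    have eu: "cinner (Suc m) e (u' i) = 0" if "i < d'" for i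
      unfolding e_def using ru[OF that] by (simp add: cinner_scale_left)
    define u where "u = u'(d' := e)"
    have onb: "onb (Suc m) X (Suc d') u"
      unfolding onb_def
    proof (intro conjI allI impI ballI)
      fix i assume "i < Suc d'" then show "u i \<in> X"
        using u'X eX by (auto simp: u_def less_Suc_eq)
    next
      fix i j assume "i < Suc d'" "j < Suc d'"
      then show "cinner (Suc m) (u i) (u j) = (if i = j then 1 else 0)"
        using u'orth ue eu ee by (auto simp: u_def less_Suc_eq)
    next
      fix v assume vX: "v \<in> X"
      define a where "a = v m / w m"
      define v' where "v' = (\<lambda>t. v t - a * r t)"
      have v'X': "v' \<in> X'"
      proof -
        have "v' \<in> X" unfolding v'_def by (rule csub_diff[OF sub vX csub_scale[OF sub rX]])
        moreover have "v' m = 0" unfolding v'_def a_def using rm wm by simp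
        ultimately show ?thesis by (simp add: X'_def)
      qed
      have cv': "cinner (Suc m) (u' i) v' = cinner (Suc m) (u' i) v" if "i < d'" for i
        unfolding v'_def using ur[OF that] by (simp add: cinner_diff_right cinner_scale_right)
      have v'exp: "v' = (\<lambda>t. \<Sum>i<d'. cinner (Suc m) (u' i) v * u' i t)"
      proof -
        have "v' = (\<lambda>t. \<Sum>i<d'. cinner (Suc m) (u' i) v' * u' i t)" by (rule u'exp[OF v'X'])
        also have "\<dots> = (\<lambda>t. \<Sum>i<d'. cinner (Suc m) (u' i) v * u' i t)"
          by (intro ext sum.cong) (auto simp: cv')
        finally show ?thesis .
      qed
      have rv': "cinner (Suc m) r v' = 0"
      proof -
        have "cinner (Suc m) r v' = cinner (Suc m) r (\<lambda>t. \<Sum>i<d'. cinner (Suc m) (u' i) v * u' i t)"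
          using v'exp by simp
        also have "\<dots> = (\<Sum>i<d'. cinner (Suc m) (u' i) v * cinner (Suc m) r (u' i))"
          by (simp add: cinner_sum_right cinner_scale_right)
        also have "\<dots> = 0" by (intro sum.neutral) (auto simp: ru)
        finally show ?thesis .
      qed
      have rv: "cinner (Suc m) r v = a * of_real S"
      proof -
        have "v = (\<lambda>t. v' t + a * r t)" by (simp add: v'_def)
        then have "cinner (Suc m) r v = cinner (Suc m) r v' + a * cinner (Suc m) r r"
          by (metis cinner_add_right cinner_scale_right)
        then show ?thesis using rv' rr by simp
      qed
      have ev: "cinner (Suc m) e v * e t = a * r t" for t
      proof -
        have "cinner (Suc m) e v * e t = of_real c * (a * of_real S) * (of_real c * r t)"
          unfolding e_def by (simp add: cinner_scale_left rv)
        also have "\<dots> = a * r t * of_real (c * c * S)" by (simp add: algebra_simps)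
        finally show ?thesis using c2 by simp
      qed
      have "v = (\<lambda>t. v' t + a * r t)" by (simp add: v'_def)
      also have "\<dots> = (\<lambda>t. (\<Sum>i<d'. cinner (Suc m) (u' i) v * u' i t) + cinner (Suc m) e v * e t)"
        using v'exp ev by (simp add: fun_eq_iff)
      also have "\<dots> = (\<lambda>t. \<Sum>i<Suc d'. cinner (Suc m) (u i) v * u i t)"
      proof (rule ext)
        fix t
        have "(\<Sum>i<d'. cinner (Suc m) (u i) v * u i t) = (\<Sum>i<d'. cinner (Suc m) (u' i) v * u' i t)"
          by (rule sum.cong) (auto simp: u_def)
        moreover have "u d' = e" by (simp add: u_def)
        ultimately show "(\<Sum>i<d'. cinner (Suc m) (u' i) v * u' i t) + cinner (Suc m) e v * e t
            = (\<Sum>i<Suc d'. cinner (Suc m) (u i) v * u i t)" by simp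
      qed
      finally show "v = (\<lambda>t. \<Sum>i<Suc d'. cinner (Suc m) (u i) v * u i t)" .
    qed
    have full: "X' \<noteq> {v. is_vec m v}" if "X \<noteq> {v. is_vec (Suc m) v}"
    proof
      assume X'full: "X' = {v. is_vec m v}"
      have "z \<in> X" if z: "is_vec (Suc m) z" for z
      proof -
        define z' where "z' = (\<lambda>t. z t - (z m / w m) * w t)"
        have "is_vec (Suc m) z'" using z csub_vec[OF sub wX]
          by (auto simp: z'_def is_vec_def)
        then have "is_vec m z'" using wm by (intro vecm) (auto simp: z'_def)
        then have "z' \<in> X" using X'full by (auto simp: X'_def)
        then have "(\<lambda>t. z' t + (z m / w m) * w t) \<in> X"
          by (rule csub_add[OF sub _ csub_scale[OF sub wX]])
        then show ?thesis by (simp add: z'_def)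
      qed
      then have "X = {v. is_vec (Suc m) v}" using csub_vec[OF sub] by blast
      with that show False by simp
    qed
    show ?thesis using onb dm dlt full
      by (intro exI[of _ "Suc d'"] exI[of _ u]) auto
  qed
qed


definition act :: "('a, 'b) monoid_scheme \<Rightarrow> nat \<Rightarrow> ('a \<Rightarrow> nat \<Rightarrow> nat \<Rightarrow> complex) \<Rightarrow> ('a \<Rightarrow> complex) \<Rightarrow> (nat \<Rightarrow> complex) \<Rightarrow> nat \<Rightarrow> complex" where
  "act G m \<rho> \<beta> v = (\<lambda>i. \<Sum>y\<in>carrier G. \<beta> y * mat_vec m (\<rho> y) v i)"

lemma act_zero[simp]: "act G m \<rho> \<beta> (\<lambda>_. 0) = (\<lambda>_. 0)"
  by (simp add: act_def)

lemma act_add: "act G m \<rho> \<beta> (\<lambda>i. u i + v i) = (\<lambda>i. act G m \<rho> \<beta> u i + act G m \<rho> \<beta> v i)"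
  by (simp add: act_def mat_vec_add algebra_simps sum.distrib)

lemma is_vec_act: "is_vec m (act G m \<rho> \<beta> v)"
  using is_vec_mat_vec unfolding act_def is_vec_def by simp

lemma inv_sub_csub: "invariant_subspace G m \<rho> X \<Longrightarrow> csubspace m X"
  by (simp add: invariant_subspace_def csubspace_def)

lemma inv_sub_mv: "invariant_subspace G m \<rho> X \<Longrightarrow> y \<in> carrier G \<Longrightarrow> v \<in> X \<Longrightarrow> mat_vec m (\<rho> y) v \<in> X"
  by (simp add: invariant_subspace_def)

lemma act_in_sub:
  assumes X: "invariant_subspace G m \<rho> X" and fin: "finite (carrier G)" and v: "v \<in> X"
  shows "act G m \<rho> \<beta> v \<in> X"
  unfolding act_def
  by (rule csub_sum[OF inv_sub_csub[OF X] fin])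
     (intro csub_scale[OF inv_sub_csub[OF X]] inv_sub_mv[OF X _ v])

lemma ur_hom: "unitary_rep G m \<rho> \<Longrightarrow> y \<in> carrier G \<Longrightarrow> z \<in> carrier G \<Longrightarrow>
   mat_vec m (\<rho> (y \<otimes>\<^bsub>G\<^esub> z)) v = mat_vec m (\<rho> y) (mat_vec m (\<rho> z) v)"
  by (simp add: unitary_rep_def mat_vec_mat_mul)

lemma ur_one: "unitary_rep G m \<rho> \<Longrightarrow> is_vec m v \<Longrightarrow> mat_vec m (\<rho> \<one>\<^bsub>G\<^esub>) v = v"
  by (simp add: unitary_rep_def mat_vec_id)

lemma ur_inv_left:
  assumes "group G" "unitary_rep G m \<rho>" "y \<in> carrier G" "is_vec m v"
  shows "mat_vec m (\<rho> (inv\<^bsub>G\<^esub> y)) (mat_vec m (\<rho> y) v) = v"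
proof -
  interpret group G by fact
  show ?thesis using assms ur_hom[OF assms(2), of "inv\<^bsub>G\<^esub> y" y v, symmetric] ur_one by simp
qed

lemma ur_inv_right:
  assumes "group G" "unitary_rep G m \<rho>" "y \<in> carrier G" "is_vec m v"
  shows "mat_vec m (\<rho> y) (mat_vec m (\<rho> (inv\<^bsub>G\<^esub> y)) v) = v"
proof -
  interpret group G by fact
  show ?thesis using assms ur_hom[OF assms(2), of y "inv\<^bsub>G\<^esub> y" v, symmetric] ur_one by simp
qed

lemma ur_adj:
  assumes "group G" "unitary_rep G m \<rho>" "y \<in> carrier G" "is_vec m v"
  shows "mat_vec m (adj_mat m (\<rho> y)) v = mat_vec m (\<rho> (inv\<^bsub>G\<^esub> y)) v"
proof -
  define w where "w = mat_vec m (adj_mat m (\<rho> y)) v"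
  have "mat_vec m (\<rho> y) w = v"
    using assms(2,3,4) by (simp add: w_def mat_vec_mat_mul[symmetric] unitary_rep_def mat_vec_id)
  then have "mat_vec m (\<rho> (inv\<^bsub>G\<^esub> y)) v = w"
    using ur_inv_left[OF assms(1,2,3), of w] by (simp add: w_def)
  then show ?thesis by (simp add: w_def)
qed

lemma ur_cinner:
  assumes "group G" "unitary_rep G m \<rho>" "y \<in> carrier G" "is_vec m v"
  shows "cinner m w (mat_vec m (\<rho> y) v) = cinner m (mat_vec m (\<rho> (inv\<^bsub>G\<^esub> y)) w) v"
proof -
  interpret group G by fact
  have "cinner m (mat_vec m (\<rho> (inv\<^bsub>G\<^esub> y)) w) v = cinner m w (mat_vec m (adj_mat m (\<rho> (inv\<^bsub>G\<^esub> y))) v)"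
    by (rule cinner_adj)
  also have "\<dots> = cinner m w (mat_vec m (\<rho> y) v)"
    using ur_adj[OF assms(1,2) _ assms(4), of "inv\<^bsub>G\<^esub> y"] assms(3) by simp
  finally show ?thesis by simp
qed

lemma orth_invariant:
  assumes G: "group G" and U: "unitary_rep G m \<rho>" and W: "invariant_subspace G m \<rho> W"
  shows "invariant_subspace G m \<rho> {v. is_vec m v \<and> (\<forall>w\<in>W. cinner m w v = 0)}"
proof -
  interpret group G by fact
  have Wv: "\<And>w. w \<in> W \<Longrightarrow> is_vec m w" using W by (auto simp: invariant_subspace_def)
  show ?thesis
    unfolding invariant_subspace_def
  proof (intro conjI ballI allI subsetI)
    fix y v assume y: "y \<in> carrier G" and v: "v \<in> {v. is_vec m v \<and> (\<forall>w\<in>W. cinner m w v = 0)}"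
    have "cinner m w (mat_vec m (\<rho> y) v) = 0" if w: "w \<in> W" for w
      using ur_cinner[OF G U y, of v w] v inv_sub_mv[OF W _ w, of "inv\<^bsub>G\<^esub> y"] y by auto
    then show "mat_vec m (\<rho> y) v \<in> {v. is_vec m v \<and> (\<forall>w\<in>W. cinner m w v = 0)}" by simp
  qed (auto simp: cinner_add_right cinner_scale_right is_vec_def)
qed

definition compr :: "nat \<Rightarrow> ('a \<Rightarrow> nat \<Rightarrow> nat \<Rightarrow> complex) \<Rightarrow> nat \<Rightarrow> (nat \<Rightarrow> nat \<Rightarrow> complex) \<Rightarrow> 'a \<Rightarrow> nat \<Rightarrow> nat \<Rightarrow> complex" where
  "compr m \<rho> d u = (\<lambda>y i j. if i < d \<and> j < d then cinner m (u i) (mat_vec m (\<rho> y) (u j)) else 0)"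

lemma compr_unitary:
  assumes G: "group G" and U: "unitary_rep G m \<rho>" and X: "invariant_subspace G m \<rho> X"
    and B: "onb m X d u"
  shows "unitary_rep G d (compr m \<rho> d u)"
proof -
  interpret group G by fact
  have uX: "\<And>i. i < d \<Longrightarrow> u i \<in> X" using B by (simp add: onb_def)
  have uv: "\<And>i. i < d \<Longrightarrow> is_vec m (u i)" using uX X by (auto simp: invariant_subspace_def)
  have uo: "\<And>i j. i < d \<Longrightarrow> j < d \<Longrightarrow> cinner m (u i) (u j) = (if i = j then 1 else 0)"
    using B by (simp add: onb_def)
  have ue: "\<And>v. v \<in> X \<Longrightarrow> v = (\<lambda>t. \<Sum>i<d. cinner m (u i) v * u i t)"
    using B by (simp add: onb_def)
  let ?r = "compr m \<rho> d u"
  have hom: "?r (y \<otimes>\<^bsub>G\<^esub> z) = mat_mul d (?r y) (?r z)" if y: "y \<in> carrier G" and z: "z \<in> carrier G" for y z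
  proof (intro ext)
    fix i j
    show "?r (y \<otimes>\<^bsub>G\<^esub> z) i j = mat_mul d (?r y) (?r z) i j"
    proof (cases "i < d \<and> j < d")
      case True
      then have i: "i < d" and j: "j < d" by auto
      have zX: "mat_vec m (\<rho> z) (u j) \<in> X" using inv_sub_mv[OF X z uX[OF j]] .
      have "?r (y \<otimes>\<^bsub>G\<^esub> z) i j = cinner m (u i) (mat_vec m (\<rho> y) (mat_vec m (\<rho> z) (u j)))"
        using True ur_hom[OF U y z] by (simp add: compr_def)
      also have "\<dots> = cinner m (u i) (mat_vec m (\<rho> y)
           (\<lambda>t. \<Sum>k<d. cinner m (u k) (mat_vec m (\<rho> z) (u j)) * u k t))"
        using ue[OF zX] by simp
      also have "\<dots> = (\<Sum>k<d. cinner m (u k) (mat_vec m (\<rho> z) (u j)) * cinner m (u i) (mat_vec m (\<rho> y) (u k)))"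
        by (simp add: mat_vec_sum mat_vec_scale cinner_sum_right cinner_scale_right)
      also have "\<dots> = mat_mul d (?r y) (?r z) i j"
        using True by (simp add: mat_mul_def compr_def mult.commute)
      finally show ?thesis .
    qed (auto simp: compr_def mat_mul_def)
  qed
  have one: "?r \<one>\<^bsub>G\<^esub> = id_mat d"
    by (intro ext) (auto simp: compr_def id_mat_def ur_one[OF U] uv uo)
  have adj: "adj_mat d (?r y) = ?r (inv\<^bsub>G\<^esub> y)" if y: "y \<in> carrier G" for y
  proof (intro ext)
    fix i j
    show "adj_mat d (?r y) i j = ?r (inv\<^bsub>G\<^esub> y) i j"
    proof (cases "i < d \<and> j < d")
      case True
      have "adj_mat d (?r y) i j = cnj (cinner m (u j) (mat_vec m (\<rho> y) (u i)))"
        using True by (simp add: adj_mat_def compr_def)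
      also have "\<dots> = cnj (cinner m (mat_vec m (\<rho> (inv\<^bsub>G\<^esub> y)) (u j)) (u i))"
        using ur_cinner[OF G U y uv, of i "u j"] True by simp
      also have "\<dots> = cinner m (u i) (mat_vec m (\<rho> (inv\<^bsub>G\<^esub> y)) (u j))"
        by (simp add: cinner_cnj)
      finally show ?thesis using True by (simp add: compr_def)
    qed (auto simp: compr_def adj_mat_def)
  qed
  have unit: "\<forall>y\<in>carrier G. mat_mul d (?r y) (adj_mat d (?r y)) = id_mat d"
  proof
    fix y assume y: "y \<in> carrier G"
    show "mat_mul d (?r y) (adj_mat d (?r y)) = id_mat d"
      using adj[OF y] hom[OF y inv_closed[OF y]] one y by simp
  qed
  have ismat: "\<forall>g\<in>carrier G. is_mat d (?r g)" by (simp add: is_mat_def compr_def)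
  show ?thesis unfolding unitary_rep_def using ismat hom one unit by blast
qed

lemma compr_act:
  assumes G: "group G" and fin: "finite (carrier G)" and U: "unitary_rep G m \<rho>"
    and X: "invariant_subspace G m \<rho> X" and B: "onb m X d u"
    and v: "v \<in> X" and nz: "act G m \<rho> \<beta> v \<noteq> (\<lambda>_. 0)"
  shows "\<exists>c. is_vec d c \<and> act G d (compr m \<rho> d u) \<beta> c \<noteq> (\<lambda>_. 0)"
proof -
  have uX: "\<And>i. i < d \<Longrightarrow> u i \<in> X" using B by (simp add: onb_def)
  have ue: "\<And>v. v \<in> X \<Longrightarrow> v = (\<lambda>t. \<Sum>i<d. cinner m (u i) v * u i t)"
    using B by (simp add: onb_def)
  define c where "c = (\<lambda>j. if j < d then cinner m (u j) v else 0)"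
  have cv: "is_vec d c" by (simp add: c_def is_vec_def)
  have key: "act G d (compr m \<rho> d u) \<beta> c i = cinner m (u i) (act G m \<rho> \<beta> v)" if i: "i < d" for i
  proof -
    have "act G d (compr m \<rho> d u) \<beta> c i =
        (\<Sum>y\<in>carrier G. \<beta> y * (\<Sum>j<d. cinner m (u i) (mat_vec m (\<rho> y) (u j)) * cinner m (u j) v))"
      using i by (simp add: act_def mat_vec_def compr_def c_def)
    also have "\<dots> = (\<Sum>y\<in>carrier G. \<beta> y * cinner m (u i) (mat_vec m (\<rho> y)
          (\<lambda>t. \<Sum>j<d. cinner m (u j) v * u j t)))"
      by (simp only: mat_vec_sum mat_vec_scale cinner_sum_right cinner_scale_right) (simp add: mult.commute)
    also have "\<dots> = (\<Sum>y\<in>carrier G. \<beta> y * cinner m (u i) (mat_vec m (\<rho> y) v))"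
      using ue[OF v] by simp
    also have "\<dots> = cinner m (u i) (act G m \<rho> \<beta> v)"
      by (simp add: act_def cinner_sum_right cinner_scale_right)
    finally show ?thesis .
  qed
  have aX: "act G m \<rho> \<beta> v \<in> X" by (rule act_in_sub[OF X fin v])
  have "\<exists>i<d. cinner m (u i) (act G m \<rho> \<beta> v) \<noteq> 0"
  proof (rule ccontr)
    assume "\<not> ?thesis"
    then have "act G m \<rho> \<beta> v = (\<lambda>t. \<Sum>i<d. 0 * u i t)"
      using ue[OF aX] by (metis (no_types, lifting) lessThan_iff sum.cong)
    then show False using nz by simp
  qed
  then show ?thesis using key cv by (metis)
qed


lemma reduce_sub:
  assumes G: "group G" and fin: "finite (carrier G)" and U: "unitary_rep G m \<rho>"
    and X: "invariant_subspace G m \<rho> X" and Xne: "X \<noteq> {v. is_vec m v}"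
    and x: "x \<in> X" and nz: "act G m \<rho> \<beta> x \<noteq> (\<lambda>_. 0)"
  shows "\<exists>d \<sigma> c. d < m \<and> 1 \<le> d \<and> unitary_rep G d \<sigma> \<and> is_vec d c \<and> act G d \<sigma> \<beta> c \<noteq> (\<lambda>_. 0)"
proof -
  obtain d u where B: "onb m X d u" and dm: "X \<noteq> {v. is_vec m v} \<longrightarrow> d < m"
    using onb_exists[OF inv_sub_csub[OF X]] by blast
  have "d \<noteq> 0"
  proof
    assume "d = 0"
    then have "x = (\<lambda>_. 0)" using B x by (simp add: onb_def)
    then show False using nz by simp
  qed
  then show ?thesis using dm Xne compr_unitary[OF G U X B] compr_act[OF G fin U X B x nz]
    by (intro exI[of _ d] exI[of _ "compr m \<rho> d u"]) auto
qed

lemma reduce: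
  assumes G: "group G" and fin: "finite (carrier G)"
  shows "unitary_rep G m \<rho> \<Longrightarrow> 1 \<le> m \<Longrightarrow> is_vec m v \<Longrightarrow> act G m \<rho> \<beta> v \<noteq> (\<lambda>_. 0) \<Longrightarrow>
    \<exists>m' \<sigma> w. irreducible_unitary_rep G m' \<sigma> \<and> is_vec m' w \<and> act G m' \<sigma> \<beta> w \<noteq> (\<lambda>_. 0)"
proof (induction m arbitrary: \<rho> v rule: less_induct)
  case (less m)
  show ?case
  proof (cases "irreducible_unitary_rep G m \<rho>")
    case True
    then show ?thesis using less.prems by blast
  next
    case False
    then obtain W where W: "invariant_subspace G m \<rho> W" and W0: "W \<noteq> {\<lambda>_. 0}"
      and Wf: "W \<noteq> {v. is_vec m v}"
      using less.prems unfolding irreducible_unitary_rep_def by blast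
    define Wp where "Wp = {v. is_vec m v \<and> (\<forall>w\<in>W. cinner m w v = 0)}"
    have Wp: "invariant_subspace G m \<rho> Wp" unfolding Wp_def by (rule orth_invariant[OF G less.prems(1) W])
    obtain d u where B: "onb m W d u"
      using onb_exists[OF inv_sub_csub[OF W]] by blast
    have uX: "\<And>i. i < d \<Longrightarrow> u i \<in> W" using B by (simp add: onb_def)
    have uo: "\<And>i j. i < d \<Longrightarrow> j < d \<Longrightarrow> cinner m (u i) (u j) = (if i = j then 1 else 0)"
      using B by (simp add: onb_def)
    have ue: "\<And>v. v \<in> W \<Longrightarrow> v = (\<lambda>t. \<Sum>i<d. cinner m (u i) v * u i t)"
      using B by (simp add: onb_def)
    define p where "p = (\<lambda>t. \<Sum>i<d. cinner m (u i) v * u i t)"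
    define q where "q = (\<lambda>t. v t - p t)"
    have pW: "p \<in> W" unfolding p_def
      by (rule csub_sum[OF inv_sub_csub[OF W]]) (auto intro: csub_scale[OF inv_sub_csub[OF W]] uX)
    have uq: "cinner m (u i) q = 0" if i: "i < d" for i
    proof -
      have "cinner m (u i) p = (\<Sum>j<d. cinner m (u j) v * cinner m (u i) (u j))"
        unfolding p_def by (simp add: cinner_sum_right cinner_scale_right)
      also have "\<dots> = (\<Sum>j<d. if j = i then cinner m (u j) v else 0)"
        by (rule sum.cong) (auto simp: uo i)
      also have "\<dots> = cinner m (u i) v" using i by (simp add: sum.delta)
      finally show ?thesis unfolding q_def by (simp add: cinner_diff_right)
    qed
    have qWp: "q \<in> Wp"
    proof -
      have "is_vec m q" using less.prems(3) csub_vec[OF inv_sub_csub[OF W] pW]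
        by (simp add: q_def is_vec_def)
      moreover have "cinner m w q = 0" if w: "w \<in> W" for w
      proof -
        have "cinner m w q = cinner m (\<lambda>t. \<Sum>i<d. cinner m (u i) w * u i t) q"
          using ue[OF w] by simp
        also have "\<dots> = (\<Sum>i<d. cnj (cinner m (u i) w) * cinner m (u i) q)"
          by (simp add: cinner_sum_left cinner_scale_left)
        also have "\<dots> = 0" by (intro sum.neutral) (auto simp: uq)
        finally show ?thesis .
      qed
      ultimately show ?thesis by (simp add: Wp_def)
    qed
    have "v = (\<lambda>t. p t + q t)" by (simp add: q_def)
    then have "act G m \<rho> \<beta> v = (\<lambda>i. act G m \<rho> \<beta> p i + act G m \<rho> \<beta> q i)"
      by (metis act_add)
    then have "act G m \<rho> \<beta> p \<noteq> (\<lambda>_. 0) \<or> act G m \<rho> \<beta> q \<noteq> (\<lambda>_. 0)"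
      using less.prems(4) by auto
    moreover have "Wp \<noteq> {v. is_vec m v}"
    proof
      assume "Wp = {v. is_vec m v}"
      then have "\<forall>w\<in>W. w \<in> Wp" using csub_vec[OF inv_sub_csub[OF W]] by blast
      then have "\<forall>w\<in>W. w = (\<lambda>_. 0)"
        using cinner_self_eq_0 csub_vec[OF inv_sub_csub[OF W]] by (simp add: Wp_def) blast
      then show False using W0 csub_zero[OF inv_sub_csub[OF W]] by blast
    qed
    ultimately obtain d' \<sigma> c where "d' < m" "1 \<le> d'" "unitary_rep G d' \<sigma>" "is_vec d' c"
      "act G d' \<sigma> \<beta> c \<noteq> (\<lambda>_. 0)"
      using reduce_sub[OF G fin less.prems(1) W Wf pW] reduce_sub[OF G fin less.prems(1) Wp _ qWp]
      by blast
    then show ?thesis using less.IH by blast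
  qed
qed


lemma regular:
  fixes G :: "('a, 'b) monoid_scheme" (structure)
  assumes G: "group G" and fin: "finite (carrier G)" and t: "t \<in> carrier G" and bt: "\<beta> t \<noteq> 0"
  shows "\<exists>m \<rho> v. unitary_rep G m \<rho> \<and> 1 \<le> m \<and> is_vec m v \<and> act G m \<rho> \<beta> v \<noteq> (\<lambda>_. 0)"
proof -
  interpret group G by fact
  define N where "N = card (carrier G)"
  obtain f where f: "bij_betw f {0..<N} (carrier G)"
    using ex_bij_betw_nat_finite[OF fin] unfolding N_def by blast
  define idx where "idx = the_inv_into {0..<N} f"
  have fC: "\<And>k. k < N \<Longrightarrow> f k \<in> carrier G" using f by (auto simp: bij_betw_def)
  have idxN: "\<And>a. a \<in> carrier G \<Longrightarrow> idx a < N"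
    using f unfolding idx_def by (metis atLeastLessThan_iff bij_betw_def the_inv_into_into order_refl)
  have fidx: "\<And>a. a \<in> carrier G \<Longrightarrow> f (idx a) = a"
    using f unfolding idx_def by (metis bij_betw_def f_the_inv_into_f)
  have finj: "\<And>i j. i < N \<Longrightarrow> j < N \<Longrightarrow> f i = f j \<longleftrightarrow> i = j"
    using f unfolding bij_betw_def inj_on_def by auto
  have feq: "\<And>k a. k < N \<Longrightarrow> a \<in> carrier G \<Longrightarrow> f k = a \<longleftrightarrow> k = idx a"
    using finj idxN fidx by metis
  have sumf: "(\<Sum>k<N. if f k = a then F k else 0) = F (idx a)" if a: "a \<in> carrier G" for a and F :: "nat \<Rightarrow> complex"
  proof -
    have "(\<Sum>k<N. if f k = a then F k else 0) = (\<Sum>k<N. if k = idx a then F k else 0)"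
      by (rule sum.cong) (auto simp: feq a)
    also have "\<dots> = F (idx a)" using idxN[OF a] by (simp add: sum.delta')
    finally show ?thesis .
  qed
  define R where "R = (\<lambda>y i j. if i < N \<and> j < N \<and> f i = y \<otimes> f j then 1 else (0::complex))"
  have hom: "R (y \<otimes> z) = mat_mul N (R y) (R z)" if y: "y \<in> carrier G" and z: "z \<in> carrier G" for y z
  proof (intro ext)
    fix i j
    show "R (y \<otimes> z) i j = mat_mul N (R y) (R z) i j"
    proof (cases "i < N \<and> j < N")
      case True
      have "mat_mul N (R y) (R z) i j = (\<Sum>k<N. if f k = z \<otimes> f j then (if f i = y \<otimes> f k then 1 else 0) else 0)"
        using True by (simp add: mat_mul_def R_def) (rule sum.cong, auto)
      also have "\<dots> = (if f i = y \<otimes> f (idx (z \<otimes> f j)) then 1 else 0)"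
        by (rule sumf) (use True fC z in auto)
      also have "\<dots> = R (y \<otimes> z) i j"
        using True fC y z by (simp add: R_def fidx m_assoc)
      finally show ?thesis by simp
    qed (auto simp: R_def mat_mul_def)
  qed
  have one: "R \<one> = id_mat N"
    by (intro ext) (auto simp: R_def id_mat_def fC finj)
  have unit: "mat_mul N (R y) (adj_mat N (R y)) = id_mat N" if y: "y \<in> carrier G" for y
  proof (intro ext)
    fix i j
    show "mat_mul N (R y) (adj_mat N (R y)) i j = id_mat N i j"
    proof (cases "i < N \<and> j < N")
      case True
      have e1: "f i = y \<otimes> f k \<longleftrightarrow> f k = inv y \<otimes> f i" if "k < N" for k
        using fC True that y by (metis inv_closed l_inv m_assoc r_inv l_one m_closed)
      have "mat_mul N (R y) (adj_mat N (R y)) i j =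
          (\<Sum>k<N. if f k = inv y \<otimes> f i then (if f j = y \<otimes> f k then 1 else 0) else 0)"
        using True by (simp add: mat_mul_def R_def adj_mat_def) (rule sum.cong, auto simp: e1)
      also have "\<dots> = (if f j = y \<otimes> f (idx (inv y \<otimes> f i)) then 1 else 0)"
        by (rule sumf) (use True fC y in auto)
      also have "\<dots> = id_mat N i j"
        using True fC y finj by (auto simp: id_mat_def fidx m_assoc[symmetric])
      finally show ?thesis .
    qed (auto simp: R_def mat_mul_def id_mat_def)
  qed
  have ur: "unitary_rep G N R"
    unfolding unitary_rep_def using hom one unit by (auto simp: is_mat_def R_def)
  have N1: "1 \<le> N" unfolding N_def using fin t by (metis One_nat_def Suc_leI card_gt_0_iff empty_iff)
  define v where "v = (\<lambda>j. if j = idx \<one> then 1 else (0::complex))"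
  have vv: "is_vec N v" using idxN[OF one_closed] by (auto simp: v_def is_vec_def)
  have mv: "mat_vec N (R y) v i = (if f i = y then 1 else 0)" if y: "y \<in> carrier G" and i: "i < N" for y i
  proof -
    have "mat_vec N (R y) v i = (\<Sum>j<N. R y i j * (if j = idx \<one> then 1 else 0))"
      using i unfolding mat_vec_def v_def by simp
    also have "\<dots> = (\<Sum>j<N. if j = idx \<one> then R y i j else 0)"
      by (rule sum.cong) auto
    also have "\<dots> = R y i (idx \<one>)" using idxN[OF one_closed] by (simp add: sum.delta')
    also have "\<dots> = (if f i = y then 1 else 0)"
      using i y idxN[OF one_closed] by (simp add: R_def fidx)
    finally show ?thesis .
  qed
  have "act G N R \<beta> v (idx t) = \<beta> t"
  proof -
    have "act G N R \<beta> v (idx t) = (\<Sum>y\<in>carrier G. if y = t then \<beta> y else 0)"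
      unfolding act_def by (rule sum.cong) (auto simp: mv idxN[OF t] fidx[OF t])
    also have "\<dots> = \<beta> t" using t fin by (simp add: sum.delta)
    finally show ?thesis .
  qed
  then have "act G N R \<beta> v \<noteq> (\<lambda>_. 0)" using bt by (metis)
  then show ?thesis using ur N1 vv by blast
qed

theorem fourier_injective:
  assumes G: "group G" and fin: "finite (carrier G)"
    and H: "\<And>m \<sigma> w. irreducible_unitary_rep G m \<sigma> \<Longrightarrow> is_vec m w \<Longrightarrow> act G m \<sigma> \<beta> w = (\<lambda>_. 0)"
    and t: "t \<in> carrier G"
  shows "\<beta> t = 0"
proof (rule ccontr)
  assume "\<beta> t \<noteq> 0"
  then obtain m \<rho> v where "unitary_rep G m \<rho>" "1 \<le> m" "is_vec m v" "act G m \<rho> \<beta> v \<noteq> (\<lambda>_. 0)"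
    using regular[OF G fin t] by blast
  then show False using reduce[OF G fin] H by blast
qed


lemma mat_vec_mdiff: "mat_vec n (\<lambda>i j. A i j - B i j) v = (\<lambda>i. mat_vec n A v i - mat_vec n B v i)"
  by (auto simp: mat_vec_def algebra_simps sum_subtractf)
lemma mat_vec_mscale: "mat_vec n (\<lambda>i j. c * A i j) v = (\<lambda>i. c * mat_vec n A v i)"
  by (auto simp: mat_vec_def algebra_simps sum_distrib_left)

lemma polar:
  assumes H: "\<And>v. is_vec n v \<Longrightarrow> cinner n v (mat_vec n A v) = 0" and v: "is_vec n v"
  shows "mat_vec n A v = (\<lambda>_. 0)"
proof -
  have sym: "cinner n u (mat_vec n A w) + cinner n w (mat_vec n A u) = 0"
    if u: "is_vec n u" and w: "is_vec n w" for u w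
  proof -
    have "is_vec n (\<lambda>i. u i + w i)" using u w by (simp add: is_vec_def)
    from H[OF this] H[OF u] H[OF w] show ?thesis
      by (simp add: mat_vec_add cinner_add_left cinner_add_right)
  qed
  have z: "cinner n u (mat_vec n A w) = 0" if u: "is_vec n u" and w: "is_vec n w" for u w
  proof -
    have iw: "is_vec n (\<lambda>i. \<i> * w i)" using w by (simp add: is_vec_def)
    have 1: "cinner n u (mat_vec n A w) + cinner n w (mat_vec n A u) = 0" by (rule sym[OF u w])
    have "cinner n u (mat_vec n A (\<lambda>i. \<i> * w i)) + cinner n (\<lambda>i. \<i> * w i) (mat_vec n A u) = 0"
      by (rule sym[OF u iw])
    then have 2: "\<i> * cinner n u (mat_vec n A w) - \<i> * cinner n w (mat_vec n A u) = 0"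
      by (simp add: mat_vec_scale cinner_scale_right cinner_scale_left)
    then have "\<i> * (cinner n u (mat_vec n A w) - cinner n w (mat_vec n A u)) = 0"
      by (simp only: right_diff_distrib)
    then have "cinner n u (mat_vec n A w) = cinner n w (mat_vec n A u)" by simp
    with 1 show ?thesis by simp
  qed
  have "cinner n (mat_vec n A v) (mat_vec n A v) = 0" using z[OF is_vec_mat_vec v] .
  then show ?thesis using cinner_self_eq_0[OF is_vec_mat_vec] by blast
qed


lemma quad_expand:
  "cinner n (\<lambda>i. x i + of_real t * v i) (mat_vec n A (\<lambda>i. x i + of_real t * v i)) =
   cinner n x (mat_vec n A x) + of_real t * (cinner n x (mat_vec n A v) + cinner n v (mat_vec n A x))
   + (of_real t)\<^sup>2 * cinner n v (mat_vec n A v)"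
proof -
  have "cinner n (\<lambda>i. x i + of_real t * v i) (mat_vec n A (\<lambda>i. x i + of_real t * v i)) =
    cinner n (\<lambda>i. x i + of_real t * v i) (\<lambda>i. mat_vec n A x i + of_real t * mat_vec n A v i)"
    by (simp only: mat_vec_add mat_vec_scale)
  also have "\<dots> = cinner n (\<lambda>i. x i + of_real t * v i) (mat_vec n A x) +
      of_real t * cinner n (\<lambda>i. x i + of_real t * v i) (mat_vec n A v)"
    by (simp only: cinner_add_right cinner_scale_right)
  also have "\<dots> = (cinner n x (mat_vec n A x) + of_real t * cinner n v (mat_vec n A x)) +
      of_real t * (cinner n x (mat_vec n A v) + of_real t * cinner n v (mat_vec n A v))"
    by (simp only: cinner_add_left cinner_scale_left complex_cnj_complex_of_real)
  finally show ?thesis by (simp add: algebra_simps power2_eq_square)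
qed

lemma inner_expand:
  "cinner n (\<lambda>i. x i + of_real t * v i) (\<lambda>i. x i + of_real t * v i) =
   cinner n x x + of_real t * (cinner n x v + cinner n v x) + (of_real t)\<^sup>2 * cinner n v v"
proof -
  have "cinner n (\<lambda>i. x i + of_real t * v i) (\<lambda>i. x i + of_real t * v i) =
      cinner n (\<lambda>i. x i + of_real t * v i) x + of_real t * cinner n (\<lambda>i. x i + of_real t * v i) v"
    by (simp only: cinner_add_right cinner_scale_right)
  also have "\<dots> = (cinner n x x + of_real t * cinner n v x) +
      of_real t * (cinner n x v + of_real t * cinner n v v)"
    by (simp only: cinner_add_left cinner_scale_left complex_cnj_complex_of_real)
  finally show ?thesis by (simp add: algebra_simps power2_eq_square)
qed

lemma quad_eventually:
  fixes a1 a2 b1 b2 c :: complex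
  assumes "eventually (\<lambda>t::real. c + of_real t * a1 + (of_real t)\<^sup>2 * a2 =
              c * (1 + of_real t * b1 + (of_real t)\<^sup>2 * b2)) (at 0)"
  shows "a2 = c * b2"
proof -
  obtain d where d: "d > 0" and P: "\<And>t::real. t \<noteq> 0 \<Longrightarrow> dist t 0 < d \<Longrightarrow>
      c + of_real t * a1 + (of_real t)\<^sup>2 * a2 = c * (1 + of_real t * b1 + (of_real t)\<^sup>2 * b2)"
    using assms unfolding eventually_at by auto
  have L: "(a1 - c * b1) + of_real t * (a2 - c * b2) = 0" if "t \<noteq> 0" "\<bar>t\<bar> < d" for t :: real
  proof -
    have "c + of_real t * a1 + (of_real t)\<^sup>2 * a2 = c * (1 + of_real t * b1 + (of_real t)\<^sup>2 * b2)"
      using P[of t] that by (simp add: dist_real_def)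
    then have "of_real t * ((a1 - c * b1) + of_real t * (a2 - c * b2)) = 0"
      by (simp add: algebra_simps power2_eq_square)
    then show ?thesis using that(1) by simp
  qed
  have 1: "(a1 - c * b1) + of_real (d/2) * (a2 - c * b2) = 0" using d by (intro L) auto
  have 2: "(a1 - c * b1) + of_real (d/4) * (a2 - c * b2) = 0" using d by (intro L) auto
  have "of_real (d/2) * (a2 - c * b2) = of_real (d/4) * (a2 - c * b2)"
    using 1 2 by (metis add_left_cancel)
  then have "(of_real (d/2) - of_real (d/4)) * (a2 - c * b2) = 0"
    by (simp only: left_diff_distrib) simp
  moreover have "(of_real (d/2) - of_real (d/4) :: complex) \<noteq> 0" using d by simp
  ultimately have "a2 - c * b2 = 0" by simp
  then show ?thesis by simp
qed


lemma sum_upd: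
  fixes Q :: "nat \<Rightarrow> 'v \<Rightarrow> complex"
  assumes "finite A" "k \<in> A"
  shows "(\<Sum>j\<in>A. Q j ((\<xi>(k := y)) j)) = (\<Sum>j\<in>A. Q j (\<xi> j)) - Q k (\<xi> k) + Q k y"
proof -
  have "(\<Sum>j\<in>A. Q j ((\<xi>(k := y)) j)) = Q k y + (\<Sum>j\<in>A - {k}. Q j ((\<xi>(k := y)) j))"
    by (simp only: sum.remove[OF assms] fun_upd_same)
  also have "(\<Sum>j\<in>A - {k}. Q j ((\<xi>(k := y)) j)) = (\<Sum>j\<in>A - {k}. Q j (\<xi> j))"
    by (rule sum.cong) auto
  also have "(\<Sum>j\<in>A - {k}. Q j (\<xi> j)) = (\<Sum>j\<in>A. Q j (\<xi> j)) - Q k (\<xi> k)"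
    using sum.remove[OF assms, of "\<lambda>j. Q j (\<xi> j)"] by simp
  finally show ?thesis by simp
qed

lemma coord2: "continuous_on S (\<lambda>\<xi>::nat \<Rightarrow> nat \<Rightarrow> 'c::topological_space. \<xi> k i)"
proof -
  have "continuous_on UNIV (\<lambda>\<xi>::nat \<Rightarrow> nat \<Rightarrow> 'c. \<xi> k)" by simp
  then have "continuous_on UNIV (\<lambda>\<xi>::nat \<Rightarrow> nat \<Rightarrow> 'c. \<xi> k i)"
    by (rule continuous_on_product_then_coordinatewise)
  then show ?thesis by (rule continuous_on_subset) simp
qed

lemma dense_scalar:
  fixes M :: "nat \<Rightarrow> nat \<Rightarrow> nat \<Rightarrow> complex" and \<xi>0 :: "nat \<Rightarrow> nat \<Rightarrow> complex"
  assumes Oo: "open Op" and O0: "\<xi>0 \<in> Op" and S0: "\<xi>0 \<in> sphere_prod l n"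
    and Z: "\<forall>\<xi>\<in>Op \<inter> sphere_prod l n. (\<Sum>k<l. cinner (n k) (\<xi> k) (mat_vec (n k) (M k) (\<xi> k))) = 0"
    and k: "k < l"
  shows "\<exists>c. \<forall>v. is_vec (n k) v \<longrightarrow> cinner (n k) v (mat_vec (n k) (M k) v) = c * cinner (n k) v v"
proof -
  define Q where "Q j w = cinner (n j) w (mat_vec (n j) (M j) w)" for j w
  define x where "x = \<xi>0 k"
  have xv: "is_vec (n k) x" and x1: "(\<Sum>i<n k. (cmod (x i))\<^sup>2) = 1"
    using S0 k by (auto simp: sphere_prod_def x_def)
  have xx: "cinner (n k) x x = 1" using x1 by (simp add: cinner_self)
  define c where "c = Q k x"
  have upd: "Q k y = c" if y: "\<xi>0(k := y) \<in> Op \<inter> sphere_prod l n" for y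
  proof -
    have "0 = (\<Sum>j<l. Q j ((\<xi>0(k := y)) j))" using bspec[OF Z y] by (simp add: Q_def)
    also have "\<dots> = (\<Sum>j<l. Q j (\<xi>0 j)) - Q k (\<xi>0 k) + Q k y"
      using sum_upd[where A="{..<l}" and k=k and Q=Q and \<xi>=\<xi>0 and y=y] k by simp
    also have "(\<Sum>j<l. Q j (\<xi>0 j)) = 0" using Z O0 S0 by (simp add: Q_def)
    finally show ?thesis by (simp add: c_def x_def)
  qed
  show ?thesis
  proof (intro exI[of _ c] allI impI)
    fix v assume vv: "is_vec (n k) v"
    define W where "W t = (\<lambda>i. x i + complex_of_real t * v i)" for t :: real
    define N2 where "N2 t = (\<Sum>i<n k. (cmod (W t i))\<^sup>2)" for t
    define cur where "cur t = \<xi>0(k := (\<lambda>i. W t i / complex_of_real (sqrt (N2 t))))" for t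
    have N2c: "continuous_on UNIV N2"
      unfolding N2_def W_def by (intro continuous_intros)
    have W0: "W 0 = x" by (simp add: W_def)
    have N20: "N2 0 = 1" using x1 by (simp add: N2_def W0)
    define U0 where "U0 = {t. 0 < N2 t}"
    have U0o: "open U0" unfolding U0_def by (rule open_Collect_less[OF continuous_on_const N2c])
    have U00: "0 \<in> U0" by (simp add: U0_def N20)
    have curc: "continuous_on U0 cur"
    proof (rule continuous_on_coordinatewise_then_product)
      fix j
      show "continuous_on U0 (\<lambda>t. cur t j)"
      proof (cases "j = k")
        case True
        have "continuous_on U0 (\<lambda>t. W t i / complex_of_real (sqrt (N2 t)))" for i
          unfolding W_def
          by (intro continuous_intros continuous_on_subset[OF N2c]) (auto simp: U0_def)
        then have "continuous_on U0 (\<lambda>t. (\<lambda>i. W t i / complex_of_real (sqrt (N2 t))))"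
          by (rule continuous_on_coordinatewise_then_product)
        then show ?thesis using True by (simp add: cur_def)
      next
        case False
        then show ?thesis by (simp add: cur_def)
      qed
    qed
    have cur0: "cur 0 = \<xi>0" by (simp add: cur_def N20 W0 x_def)
    have "isCont cur 0" using curc U0o U00 continuous_on_eq_continuous_at by blast
    then have "(cur \<longlongrightarrow> \<xi>0) (at 0)" using cur0 by (simp add: isCont_def)
    then have ev1: "eventually (\<lambda>t. cur t \<in> Op) (at 0)"
      using topological_tendstoD Oo O0 by blast
    have "isCont N2 0" using N2c continuous_on_eq_continuous_at by blast
    then have "(N2 \<longlongrightarrow> 1) (at 0)" using N20 by (simp add: isCont_def)
    then have ev2: "eventually (\<lambda>t. 0 < N2 t) (at 0)"
      by (rule order_tendstoD) simp
    have inS: "cur t \<in> sphere_prod l n" if t: "0 < N2 t" for t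
    proof -
      have s: "sqrt (N2 t) > 0" using t by simp
      have "(\<Sum>i<n k. (cmod (W t i / complex_of_real (sqrt (N2 t))))\<^sup>2) = (\<Sum>i<n k. (cmod (W t i))\<^sup>2) / N2 t"
        using s t by (simp add: norm_divide power_divide sum_divide_distrib)
      also have "\<dots> = 1" using t by (simp add: N2_def)
      finally have 1: "(\<Sum>i<n k. (cmod (W t i / complex_of_real (sqrt (N2 t))))\<^sup>2) = 1" .
      have 2: "is_vec (n k) (\<lambda>i. W t i / complex_of_real (sqrt (N2 t)))"
        using xv vv by (simp add: is_vec_def W_def)
      show ?thesis using S0 k 1 2 unfolding sphere_prod_def cur_def by auto
    qed
    have key: "Q k (W t) = c * cinner (n k) (W t) (W t)" if t: "0 < N2 t" and tO: "cur t \<in> Op" for t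
    proof -
      define z where "z = complex_of_real (1 / sqrt (N2 t))"
      have s: "sqrt (N2 t) > 0" using t by simp
      have eqz: "(\<lambda>i. W t i / complex_of_real (sqrt (N2 t))) = (\<lambda>i. z * W t i)"
        using s by (auto simp: z_def fun_eq_iff field_simps)
      have "Q k (\<lambda>i. z * W t i) = c"
        using upd[of "\<lambda>i. W t i / complex_of_real (sqrt (N2 t))"] inS[OF t] tO eqz
        by (simp add: cur_def)
      moreover have "Q k (\<lambda>i. z * W t i) = cnj z * z * Q k (W t)"
        by (simp add: Q_def mat_vec_scale cinner_scale_left cinner_scale_right)
      moreover have "cnj z * z = complex_of_real (1 / N2 t)"
      proof -
        have "cnj z * z = complex_of_real ((1 / sqrt (N2 t)) * (1 / sqrt (N2 t)))"
          by (simp only: z_def complex_cnj_complex_of_real of_real_mult)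
        also have "(1 / sqrt (N2 t)) * (1 / sqrt (N2 t)) = 1 / N2 t"
          using t by (simp add: real_sqrt_mult_self)
        finally show ?thesis .
      qed
      ultimately have "complex_of_real (1 / N2 t) * Q k (W t) = c" by simp
      then have "Q k (W t) = c * complex_of_real (N2 t)"
        using t by (simp add: field_simps)
      also have "complex_of_real (N2 t) = cinner (n k) (W t) (W t)"
        by (simp add: N2_def cinner_self)
      finally show ?thesis .
    qed
    have "eventually (\<lambda>t::real. c + of_real t * (cinner (n k) x (mat_vec (n k) (M k) v) + cinner (n k) v (mat_vec (n k) (M k) x))
        + (of_real t)\<^sup>2 * Q k v = c * (1 + of_real t * (cinner (n k) x v + cinner (n k) v x) + (of_real t)\<^sup>2 * cinner (n k) v v)) (at 0)"
      using eventually_conj[OF ev1 ev2]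
    proof (rule eventually_mono)
      fix t assume "cur t \<in> Op \<and> 0 < N2 t"
      then have "Q k (W t) = c * cinner (n k) (W t) (W t)" using key by blast
      then show "c + of_real t * (cinner (n k) x (mat_vec (n k) (M k) v) + cinner (n k) v (mat_vec (n k) (M k) x))
        + (of_real t)\<^sup>2 * Q k v = c * (1 + of_real t * (cinner (n k) x v + cinner (n k) v x) + (of_real t)\<^sup>2 * cinner (n k) v v)"
        unfolding Q_def W_def quad_expand inner_expand using xx by (simp add: c_def Q_def)
    qed
    then have "Q k v = c * cinner (n k) v v" by (rule quad_eventually)
    then show "cinner (n k) v (mat_vec (n k) (M k) v) = c * cinner (n k) v v" by (simp add: Q_def)
  qed
qed


lemma T_xi_alt:
  "T_xi l n \<alpha> \<xi> g = (\<Sum>k<l. \<Sum>i<n k. cnj (\<xi> k i) * (\<Sum>j<n k. \<alpha> k g i j * \<xi> k j))"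
  unfolding T_xi_def cinner_def mat_vec_def by (intro sum.cong refl) auto

lemma T_xi_cont: "continuous_on UNIV (\<lambda>\<xi>. T_xi l n \<alpha> \<xi> g)"
  unfolding T_xi_alt by (intro continuous_intros coord2)

lemma T_xi_diff:
  "T_xi l n \<alpha> \<xi> g - T_xi l n \<alpha> \<xi> h =
   (\<Sum>k<l. cinner (n k) (\<xi> k) (mat_vec (n k) (\<lambda>i j. \<alpha> k g i j - \<alpha> k h i j) (\<xi> k)))"
  unfolding T_xi_def by (simp add: mat_vec_mdiff cinner_diff_right sum_subtractf)

lemma act_four:
  assumes fin: "finite (carrier G)" and a: "a1 \<in> carrier G" "a2 \<in> carrier G" "a3 \<in> carrier G" "a4 \<in> carrier G"
  shows "act G m \<sigma> (\<lambda>y. (if y = a1 then 1 else 0) - (if y = a2 then 1 else 0) - (if y = a3 then 1 else 0)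
            + (if y = a4 then 1 else 0)) w
    = (\<lambda>i. mat_vec m (\<sigma> a1) w i - mat_vec m (\<sigma> a2) w i - mat_vec m (\<sigma> a3) w i + mat_vec m (\<sigma> a4) w i)"
proof
  fix i
  have d: "(\<Sum>y\<in>carrier G. (if y = a then 1 else 0) * mat_vec m (\<sigma> y) w i) = mat_vec m (\<sigma> a) w i"
    if "a \<in> carrier G" for a
  proof -
    have "(\<Sum>y\<in>carrier G. (if y = a then 1 else 0) * mat_vec m (\<sigma> y) w i)
        = (\<Sum>y\<in>carrier G. if y = a then mat_vec m (\<sigma> y) w i else 0)"
      by (rule sum.cong) auto
    then show ?thesis using that fin by (simp add: sum.delta)
  qed
  show "act G m \<sigma> (\<lambda>y. (if y = a1 then 1 else 0) - (if y = a2 then 1 else 0) - (if y = a3 then 1 else 0)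
            + (if y = a4 then 1 else 0)) w i
    = mat_vec m (\<sigma> a1) w i - mat_vec m (\<sigma> a2) w i - mat_vec m (\<sigma> a3) w i + mat_vec m (\<sigma> a4) w i"
    unfolding act_def
    by (simp only: ring_distribs sum.distrib sum_subtractf d a)
qed

lemma mat_vec_comm1: "mat_vec 1 A (mat_vec 1 B w) = mat_vec 1 B (mat_vec 1 A w)"
  by (auto simp: mat_vec_def fun_eq_iff)

theorem proposition6p2:
  fixes G :: "('a, 'b) monoid_scheme" (structure)
    and l :: nat and n :: "nat \<Rightarrow> nat"
    and \<alpha> :: "nat \<Rightarrow> 'a \<Rightarrow> nat \<Rightarrow> nat \<Rightarrow> complex"
    and g h :: 'a
  assumes "group G" and "finite (carrier G)"
    and irr: "\<forall>k<l. irreducible_unitary_rep G (n k) (\<alpha> k) \<and> 1 < n k"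
    and inequiv: "\<forall>k<l. \<forall>k'<l. k \<noteq> k' \<longrightarrow> \<not> equivalent_reps G (n k) (\<alpha> k) (n k') (\<alpha> k')"
    and complete: "\<forall>(m::nat) (\<rho>::'a \<Rightarrow> nat \<Rightarrow> nat \<Rightarrow> complex).
                     irreducible_unitary_rep G m \<rho> \<and> 1 < m \<longrightarrow>
                     (\<exists>k<l. equivalent_reps G m \<rho> (n k) (\<alpha> k))"
    and "g \<in> carrier G" and "h \<in> carrier G" and "g \<noteq> h"
    and "\<not> central G g \<or> \<not> central G h"
  shows "nowhere_dense_in (sphere_prod l n) (V_set l n \<alpha> g h)"
proof (rule ccontr)
  note G = assms(1) and fin = assms(2) and gC = assms(6) and hC = assms(7) and gh = assms(8)
  interpret group G by fact
  assume nd: "\<not> nowhere_dense_in (sphere_prod l n) (V_set l n \<alpha> g h)"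
  define S where "S = sphere_prod l n"
  define V where "V = V_set l n \<alpha> g h"
  have "closed {\<xi>. T_xi l n \<alpha> \<xi> g = T_xi l n \<alpha> \<xi> h}"
    by (rule closed_Collect_eq[OF T_xi_cont T_xi_cont])
  moreover have "V = S \<inter> {\<xi>. T_xi l n \<alpha> \<xi> g = T_xi l n \<alpha> \<xi> h}"
    by (auto simp: V_def S_def V_set_def)
  ultimately have "closedin (top_of_set S) V" using closedin_closed by blast
  then have clV: "(top_of_set S) closure_of V = V" by (simp add: closure_of_eq)
  obtain \<xi>0 where "\<xi>0 \<in> (top_of_set S) interior_of V"
    using nd clV unfolding nowhere_dense_in_def S_def V_def by auto
  then obtain U where "openin (top_of_set S) U" "\<xi>0 \<in> U" "U \<subseteq> V"
    unfolding interior_of_def by blast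
  then obtain Op where Oo: "open Op" and O0: "\<xi>0 \<in> Op" and S0: "\<xi>0 \<in> S" and OV: "S \<inter> Op \<subseteq> V"
    unfolding openin_open by blast
  define M where "M k = (\<lambda>i j. \<alpha> k g i j - \<alpha> k h i j)" for k
  have Z: "\<forall>\<xi>\<in>Op \<inter> sphere_prod l n. (\<Sum>k<l. cinner (n k) (\<xi> k) (mat_vec (n k) (M k) (\<xi> k))) = 0"
  proof
    fix \<xi> assume "\<xi> \<in> Op \<inter> sphere_prod l n"
    then have "\<xi> \<in> V" using OV by (auto simp: S_def)
    then have "T_xi l n \<alpha> \<xi> g - T_xi l n \<alpha> \<xi> h = 0" by (simp add: V_def V_set_def)
    then show "(\<Sum>k<l. cinner (n k) (\<xi> k) (mat_vec (n k) (M k) (\<xi> k))) = 0"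
      by (simp add: T_xi_diff M_def)
  qed
  have scal: "\<exists>c. \<forall>v. is_vec (n k) v \<longrightarrow>
      (\<lambda>i. mat_vec (n k) (\<alpha> k g) v i - mat_vec (n k) (\<alpha> k h) v i) = (\<lambda>i. c * v i)" if k: "k < l" for k
  proof -
    obtain c where c: "\<And>v. is_vec (n k) v \<Longrightarrow> cinner (n k) v (mat_vec (n k) (M k) v) = c * cinner (n k) v v"
      using dense_scalar[OF Oo O0 S0[unfolded S_def] Z k] by blast
    define A where "A = (\<lambda>i j. M k i j - c * id_mat (n k) i j)"
    have mA: "mat_vec (n k) A v = (\<lambda>i. mat_vec (n k) (M k) v i - c * v i)" if "is_vec (n k) v" for v
      unfolding A_def using that by (simp add: mat_vec_mdiff mat_vec_mscale mat_vec_id)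
    have "mat_vec (n k) A v = (\<lambda>_. 0)" if v: "is_vec (n k) v" for v
    proof (rule polar[OF _ v])
      fix u assume u: "is_vec (n k) u"
      show "cinner (n k) u (mat_vec (n k) A u) = 0"
        using c[OF u] by (simp add: mA[OF u] cinner_diff_right cinner_scale_right)
    qed
    then show ?thesis
      by (intro exI[of _ c]) (auto simp: fun_eq_iff mA M_def mat_vec_mdiff)
  qed
  have comm: "x \<otimes> g = g \<otimes> x \<and> h \<otimes> x = x \<otimes> h" if xC: "x \<in> carrier G" for x
  proof -
    define \<beta> where "\<beta> = (\<lambda>y. (if y = x \<otimes> g then 1 else 0) - (if y = x \<otimes> h then 1 else 0)
       - (if y = g \<otimes> x then 1 else 0) + (if y = h \<otimes> x then (1::complex) else 0))"
    have H: "act G m \<sigma> \<beta> w = (\<lambda>_. 0)" if irrs: "irreducible_unitary_rep G m \<sigma>" and w: "is_vec m w" for m \<sigma> w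
    proof -
      have U: "unitary_rep G m \<sigma>" and m1: "1 \<le> m" using irrs by (auto simp: irreducible_unitary_rep_def)
      have "act G m \<sigma> \<beta> w = (\<lambda>i. mat_vec m (\<sigma> x) (mat_vec m (\<sigma> g) w) i - mat_vec m (\<sigma> x) (mat_vec m (\<sigma> h) w) i
          - mat_vec m (\<sigma> g) (mat_vec m (\<sigma> x) w) i + mat_vec m (\<sigma> h) (mat_vec m (\<sigma> x) w) i)"
        unfolding \<beta>_def using act_four[OF fin, of "x \<otimes> g" "x \<otimes> h" "g \<otimes> x" "h \<otimes> x" m \<sigma> w] xC gC hC
        by (simp add: ur_hom[OF U])
      also have "\<dots> = (\<lambda>_. 0)"
      proof (cases "m = 1")
        case True
        then show ?thesis
          using mat_vec_comm1[of "\<sigma> x" "\<sigma> g" w] mat_vec_comm1[of "\<sigma> x" "\<sigma> h" w] by simp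
      next
        case False
        then have "1 < m" using m1 by simp
        then obtain k where k: "k < l" and eq: "equivalent_reps G m \<sigma> (n k) (\<alpha> k)"
          using complete irrs by blast
        obtain P Q where mk: "m = n k" and PQ: "mat_mul m P Q = id_mat m" and QP: "mat_mul m Q P = id_mat m"
          and int: "\<And>y. y \<in> carrier G \<Longrightarrow> mat_mul m P (\<sigma> y) = mat_mul m (\<alpha> k y) P"
          using eq unfolding equivalent_reps_def by auto
        obtain c where c: "\<And>v. is_vec m v \<Longrightarrow>
          (\<lambda>i. mat_vec m (\<alpha> k g) v i - mat_vec m (\<alpha> k h) v i) = (\<lambda>i. c * v i)"
          using scal[OF k] mk by auto
        have iP: "mat_vec m P (mat_vec m (\<sigma> y) u) = mat_vec m (\<alpha> k y) (mat_vec m P u)" if "y \<in> carrier G" for y u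
          using int[OF that] by (metis mat_vec_mat_mul)
        define u where "u = mat_vec m P w"
        define u' where "u' = mat_vec m (\<alpha> k x) u"
        have uv: "is_vec m u" and u'v: "is_vec m u'" by (simp_all add: u_def u'_def)
        define D where "D = (\<lambda>i. mat_vec m (\<sigma> x) (mat_vec m (\<sigma> g) w) i - mat_vec m (\<sigma> x) (mat_vec m (\<sigma> h) w) i
          - mat_vec m (\<sigma> g) (mat_vec m (\<sigma> x) w) i + mat_vec m (\<sigma> h) (mat_vec m (\<sigma> x) w) i)"
        have "mat_vec m P D = (\<lambda>i. mat_vec m (\<alpha> k x) (\<lambda>i. mat_vec m (\<alpha> k g) u i - mat_vec m (\<alpha> k h) u i) i
           - (mat_vec m (\<alpha> k g) u' i - mat_vec m (\<alpha> k h) u' i))"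
          unfolding D_def by (simp add: mat_vec_add mat_vec_diff iP xC gC hC u_def u'_def algebra_simps)
        also have "\<dots> = (\<lambda>_. 0)"
          using c[OF uv] c[OF u'v] by (simp add: mat_vec_scale u'_def fun_eq_iff)
        finally have PD: "mat_vec m P D = (\<lambda>_. 0)" .
        have "is_vec m D" unfolding D_def is_vec_def using is_vec_mat_vec unfolding is_vec_def by simp
        then have "D = mat_vec m Q (mat_vec m P D)"
          using QP by (simp add: mat_vec_mat_mul[symmetric] mat_vec_id)
        then show ?thesis using PD D_def by simp
      qed
      finally show ?thesis .
    qed
    have \<beta>0: "\<beta> t = 0" if "t \<in> carrier G" for t
      by (rule fourier_injective[OF G fin H that]) auto
    have xgh: "x \<otimes> g \<noteq> x \<otimes> h" using gh xC gC hC by simp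
    have 1: "x \<otimes> g = g \<otimes> x"
    proof (rule ccontr)
      assume ne: "x \<otimes> g \<noteq> g \<otimes> x"
      have "\<beta> (x \<otimes> g) = 0" using \<beta>0 xC gC by simp
      then show False using ne xgh by (simp add: \<beta>_def split: if_splits)
    qed
    have "\<beta> (h \<otimes> x) = 0" using \<beta>0 xC hC by simp
    then have "h \<otimes> x = x \<otimes> h" using 1 by (simp add: \<beta>_def split: if_splits)
    with 1 show ?thesis by simp
  qed
  have "central G g" "central G h"
    using comm gC hC by (auto simp: central_def)
  then show False using assms(9) by simp
qed


end
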